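(* For every positive integer $r$, $$\int_0^{\frac{\pi}{2}}\sin^{2r-1}x\,\cos\frac{x}{2}\,\mathrm{d}x=\frac{6\cdot 16^{r-1}}{r\binom{4r}{2r}}\left(\frac{4}{3}-\sqrt{2}\sum_{k=0}^{r-1} \frac{\binom{4k}{2k}}{(6k+3)16^k}\right).$$ *)

theory Defs
  imports "HOL-Analysis.Analysis"
begin

end

theory Submission
  imports Defs
begin

lemma alg: fixes s c u v w n :: real assumes "c^2 = 1 - s^2"
  shows "((2*n+2) * w * c) * (2*(2*n+3) * c * u + s * v)
    + (s*w) * (2*(2*n+3) * (- s) * u + 2*(2*n+3) * c * (- v * (1/2))
       + c * v + s * (u * (1/2))) =
   2*(2*n+3)*(2*n+2) * (w * u) - (2*(2*n+3)^2 - 1/2) * ((s * s * w) * u)"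
proof -
  have "c * c = 1 - s * s" using assms by (simp add: power2_eq_square)
  then show ?thesis by algebra
qed

lemma pw: "(s::real)^(2*q+2) = s * s^(2*q+1)" "(s::real)^(2*q+3) = s * s * s^(2*q+1)"
proof -
  have a: "2*q+2 = Suc (2*q+1)" "2*q+3 = Suc (Suc (2*q+1))" by simp_all
  show "(s::real)^(2*q+2) = s * s^(2*q+1)" "(s::real)^(2*q+3) = s * s * s^(2*q+1)"
    by (simp_all only: a power_Suc mult.assoc)
qed

lemma dG: "((\<lambda>x. sin x^(2*q+2) * (2*(2*real q+3) * cos x * cos (x/2) + sin x * sin (x/2))) has_real_derivative
   (2*(2*real q+3)*(2*real q+2) * (sin x^(2*q+1) * cos (x/2)) - (2*(2*real q+3)^2 - 1/2) * (sin x^(2*q+3) * cos(x/2)))) (at x)"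
proof -
  have e: "sin x^(2*q+2) = sin x * sin x^(2*q+1)" "sin x^(2*q+3) = sin x * sin x * sin x^(2*q+1)"
    by (rule pw)+
  have d1: "((\<lambda>x. sin x^(2*q+2)) has_real_derivative ((2*real q+2) * sin x^(2*q+1) * cos x)) (at x)"
    using DERIV_power[OF DERIV_sin, of "2*q+2" x] by (simp add: algebra_simps)
  have d2: "((\<lambda>x. 2*(2*real q+3) * cos x * cos (x/2) + sin x * sin (x/2)) has_real_derivative
     (2*(2*real q+3) * (- sin x) * cos (x/2) + 2*(2*real q+3) * cos x * (- sin (x/2) * (1/2))
       + cos x * sin (x/2) + sin x * (cos (x/2) * (1/2)))) (at x)"
    by (auto intro!: derivative_eq_intros simp: algebra_simps)
  have d: "((\<lambda>x. sin x^(2*q+2) * (2*(2*real q+3) * cos x * cos (x/2) + sin x * sin (x/2))) has_real_derivative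
    ((2*real q+2) * sin x^(2*q+1) * cos x) * (2*(2*real q+3) * cos x * cos (x/2) + sin x * sin (x/2))
    + sin x^(2*q+2) * (2*(2*real q+3) * (- sin x) * cos (x/2) + 2*(2*real q+3) * cos x * (- sin (x/2) * (1/2))
       + cos x * sin (x/2) + sin x * (cos (x/2) * (1/2)))) (at x)"
    by (rule DERIV_cong[OF DERIV_mult[OF d1 d2]]) (simp add: algebra_simps)
  show ?thesis
    apply (rule DERIV_cong[OF d])
    apply (simp only: e)
    apply (rule alg)
    by (simp add: cos_squared_eq)

qed

lemma c42: "(4 choose 2) = (6::nat)" by (simp add: choose_two)
lemma fs2: "(fact (n+2)::nat) = (n+2)*(n+1)*fact n"
  by (simp add: numeral_2_eq_2 algebra_simps)
lemma fs4: "(fact (n+4)::nat) = (n+4)*(n+3)*(n+2)*(n+1)*fact n"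
proof -
  have e: "n+4 = Suc (Suc (Suc (Suc n)))" by simp
  show ?thesis unfolding e fact_Suc by (simp add: algebra_simps)
qed
lemma c42b: "(4 choose Suc (Suc 0)) = (6::nat)" using c42 by (simp add: numeral_2_eq_2)

lemma Brec_nat: "((4*q+8) choose (2*q+4)) * ((2*q+4)*(2*q+3)) = 4*(4*q+7)*(4*q+5) * ((4*q+4) choose (2*q+2))"
proof -
  define F where "F = (fact (2*q+2) :: nat)"
  define G where "G = (fact (4*q+4) :: nat)"
  have a: "fact (2*q+4) * fact (2*q+4) * ((4*q+8) choose (2*q+4)) = (fact (4*q+8) :: nat)"
  proof -
    have "fact (2*q+4) * fact (4*q+8 - (2*q+4)) * ((4*q+8) choose (2*q+4)) = (fact (4*q+8) :: nat)"
      by (rule binomial_fact_lemma) simp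
    moreover have "4*q+8 - (2*q+4) = 2*q+4" by simp
    ultimately show ?thesis by simp
  qed
  have b: "F * F * ((4*q+4) choose (2*q+2)) = G"
  proof -
    have "fact (2*q+2) * fact (4*q+4 - (2*q+2)) * ((4*q+4) choose (2*q+2)) = (fact (4*q+4) :: nat)"
      by (rule binomial_fact_lemma) simp
    moreover have "4*q+4 - (2*q+2) = 2*q+2" by simp
    ultimately show ?thesis unfolding F_def G_def by simp
  qed
  have f1: "(fact (4*q+8)::nat) = (4*q+8)*(4*q+7)*(4*q+6)*(4*q+5)*G"
  proof -
    have e: "4*q+8 = (4*q+4)+4" "4*q+7 = (4*q+4)+3" "4*q+6 = (4*q+4)+2" "4*q+5 = (4*q+4)+1" by simp_all
    show ?thesis unfolding G_def by (simp only: e fs4)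
  qed
  have f2: "(fact (2*q+4)::nat) = (2*q+4)*(2*q+3)*F"
  proof -
    have e: "2*q+4 = (2*q+2)+2" "2*q+3 = (2*q+2)+1" by simp_all
    show ?thesis unfolding F_def by (simp only: e fs2)
  qed
  have Fp: "F > 0" unfolding F_def by simp
  define C where "C = (4*q+4) choose (2*q+2)"
  define C' where "C' = (4*q+8) choose (2*q+4)"
  have "(F*F*((2*q+4)*(2*q+3))) * (C' * ((2*q+4)*(2*q+3))) = (F*F*((2*q+4)*(2*q+3))) * (4*(4*q+7)*(4*q+5) * C)"
  proof -
    have "(F*F*((2*q+4)*(2*q+3))) * (C' * ((2*q+4)*(2*q+3))) = fact (2*q+4) * fact (2*q+4) * C'"
      unfolding f2 by (simp only: mult_ac)
    also have "\<dots> = (4*q+8)*(4*q+7)*(4*q+6)*(4*q+5)*G" using a f1 unfolding C'_def by simp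
    also have "\<dots> = (4*q+8)*(4*q+7)*(4*q+6)*(4*q+5)*(F*F*C)" using b unfolding C_def by simp
    also have "\<dots> = (F*F*((2*q+4)*(2*q+3))) * (4*(4*q+7)*(4*q+5) * C)"
    proof -
      have e: "(4*q+8)*(4*q+6) = 4*((2*q+4)*(2*q+3))" by (simp add: algebra_simps)
      have "(4*q+8)*(4*q+7)*(4*q+6)*(4*q+5)*(F*F*C) = ((4*q+8)*(4*q+6))*((4*q+7)*(4*q+5)*(F*F*C))"
        by (simp only: ac_simps)
      also have "\<dots> = (F*F*((2*q+4)*(2*q+3))) * (4*(4*q+7)*(4*q+5) * C)"
        unfolding e by (simp only: ac_simps)
      finally show ?thesis .
    qed
    finally show ?thesis .
  qed
  moreover have "F*F*((2*q+4)*(2*q+3)) \<noteq> 0" using Fp by simp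
  ultimately have "C' * ((2*q+4)*(2*q+3)) = 4*(4*q+7)*(4*q+5) * C" by (metis mult_left_cancel)
  then show ?thesis unfolding C_def C'_def .
qed
lemma Brec: "real ((4*q+8) choose (2*q+4)) * ((2*real q+4)*(2*real q+3)) = 4*(4*real q+7)*(4*real q+5) * real ((4*q+4) choose (2*q+2))"
proof -
  have "real (((4*q+8) choose (2*q+4)) * ((2*q+4)*(2*q+3))) = real (4*(4*q+7)*(4*q+5) * ((4*q+4) choose (2*q+2)))"
    using Brec_nat by metis
  then show ?thesis by simp
qed

lemma aux: fixes y B u P :: real shows "y \<noteq> 0 \<Longrightarrow> B \<noteq> 0 \<Longrightarrow> 2*u*(2*y)*(6*P/(y*B)) = 24*u*P/B"
  by (simp add: field_simps)

lemma alg2x: fixes B B' P r2 S x :: real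
  assumes "B > 0" "P > 0" "x \<ge> 0" "B' * ((2*x+4)*(2*x+3)) = 4*(4*x+7)*(4*x+5) * B"
  shows "6*(16*P)/((x+2)*B') * (4/3 - r2*(S + B/((6*(x+1)+3)*(16*P)))) =
     (2*(2*x+3)*(2*x+2) * (6*P/((x+1)*B)*(4/3 - r2*S)) - r2/2)/(2*(2*x+3)^2 - 1/2)"
proof -
  define D where "D = (4*x+5)*(4*x+7)"
  define u where "u = 2*x+3"
  have Dp: "D > 0" unfolding D_def using assms(3) by simp
  have up: "u > 0" unfolding u_def using assms(3) by simp
  have E: "(x+2)*B' * u = 2*D*B" using assms(4) unfolding D_def u_def by (simp add: algebra_simps)
  have E': "(x+2)*B' = 2*D*B/u" using E up by (simp add: eq_divide_eq)
  define M where "M = 48*u*P/(B*D)"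
  have l1: "6*(16*P)/((x+2)*B') = M" unfolding E' M_def using up Dp assms(1,2) by (simp add: field_simps)
  have s9: "6*(x+1)+3 = 3*u" unfolding u_def by simp
  have l2: "M * (B/((6*(x+1)+3)*(16*P))) = 1/D" unfolding M_def s9 using up Dp assms(1,2) by (simp add: field_simps)
  have bc: "(2*(2*x+3)^2 - 1/2) = D/2" unfolding D_def by (simp add: power2_eq_square algebra_simps)
  have xx: "(2*x+2) = 2*(x+1)" by simp
  have r1: "2*(2*x+3)*(2*x+2) * (6*P/((x+1)*B)) = M * (D/2)"
  proof -
    have x1: "x+1 \<noteq> 0" using assms(3) by simp
    have "2*(2*x+3)*(2*x+2) * (6*P/((x+1)*B)) = 2*u*(2*(x+1)) * (6*P/((x+1)*B))" unfolding u_def by simp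
    also have "\<dots> = 24*u*P/B" using aux[OF x1, of B u P] assms(1) by simp
    also have "\<dots> = M * (D/2)" unfolding M_def using Dp assms(1) by (simp add: field_simps)
    finally show ?thesis .
  qed
  have "6*(16*P)/((x+2)*B') * (4/3 - r2*(S + B/((6*(x+1)+3)*(16*P)))) =
     M * (4/3 - r2*S) - r2 * (M * (B/((6*(x+1)+3)*(16*P))))"
    unfolding l1 by (simp add: algebra_simps)
  also have "\<dots> = M * (4/3 - r2*S) - r2/D" unfolding l2 by simp
  also have "\<dots> = (M * (D/2) * (4/3 - r2*S) - r2/2)/(D/2)" using Dp by (simp add: field_simps)
  also have "\<dots> = (2*(2*x+3)*(2*x+2) * (6*P/((x+1)*B)*(4/3 - r2*S)) - r2/2)/(2*(2*x+3)^2 - 1/2)"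
    unfolding bc r1[symmetric] by (simp only: mult.assoc)
  finally show ?thesis .
qed

definition hh :: "nat \<Rightarrow> real \<Rightarrow> real" where "hh q x = sin x^(2*q+1) * cos (x/2)"
definition II :: "nat \<Rightarrow> real" where "II q = integral {0..pi/2} (hh q)"

lemma hh_int: "hh q integrable_on {0..pi/2}"
  unfolding hh_def by (intro integrable_continuous_interval continuous_intros) auto

lemma step: "(2*(2*real q+3)^2 - 1/2) * II (Suc q) = 2*(2*real q+3)*(2*real q+2) * II q - sqrt 2/2"
proof -
  define G where "G = (\<lambda>x. sin x^(2*q+2) * (2*(2*real q+3) * cos x * cos (x/2) + sin x * sin (x/2)))"
  have hs: "hh (Suc q) x = sin x^(2*q+3) * cos(x/2)" for x unfolding hh_def
    by (simp add: numeral_eq_Suc)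
  have "((\<lambda>x. 2*(2*real q+3)*(2*real q+2) * hh q x - (2*(2*real q+3)^2 - 1/2) * hh (Suc q) x)
     has_integral G (pi/2) - G 0) {0..pi/2}"
  proof (rule fundamental_theorem_of_calculus)
    show "0 \<le> pi/2" by simp
    fix x assume "x \<in> {0..pi/2}"
    show "(G has_vector_derivative (2*(2*real q+3)*(2*real q+2) * hh q x - (2*(2*real q+3)^2 - 1/2) * hh (Suc q) x)) (at x within {0..pi/2})"
      unfolding G_def hs using dG[of q x] unfolding hh_def
      by (simp add: has_real_derivative_iff_has_vector_derivative[symmetric] has_field_derivative_at_within)
  qed
  moreover have "G (pi/2) - G 0 = sqrt 2/2" unfolding G_def by (simp add: sin_45)
  ultimately have "integral {0..pi/2} (\<lambda>x. 2*(2*real q+3)*(2*real q+2) * hh q x - (2*(2*real q+3)^2 - 1/2) * hh (Suc q) x) = sqrt 2/2"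
    by (simp add: integral_unique)
  moreover have "integral {0..pi/2} (\<lambda>x. 2*(2*real q+3)*(2*real q+2) * hh q x - (2*(2*real q+3)^2 - 1/2) * hh (Suc q) x)
     = 2*(2*real q+3)*(2*real q+2) * II q - (2*(2*real q+3)^2 - 1/2) * II (Suc q)"
    unfolding II_def
    by (subst integral_diff) (auto intro!: integrable_on_mult_right hh_int simp: integral_mult_right)
  ultimately show ?thesis by simp
qed

lemma base: "II 0 = 4/3 - sqrt 2/3"
proof -
  define G where "G = (\<lambda>x::real. 2 * cos x * cos (x/2) + sin x * sin (x/2))"
  have "((\<lambda>x. -(3/2) * hh 0 x) has_integral G (pi/2) - G 0) {0..pi/2}"
  proof (rule fundamental_theorem_of_calculus)
    show "0 \<le> pi/2" by simp
    fix x assume "x \<in> {0..pi/2}"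
    have "(G has_real_derivative (2 * (- sin x) * cos (x/2) + 2 * cos x * (- sin (x/2) * (1/2))
       + cos x * sin (x/2) + sin x * (cos (x/2) * (1/2)))) (at x)"
      unfolding G_def by (auto intro!: derivative_eq_intros simp: algebra_simps)
    then have "(G has_real_derivative (-(3/2) * hh 0 x)) (at x)"
      by (rule DERIV_cong) (simp add: hh_def algebra_simps)
    then show "(G has_vector_derivative (-(3/2) * hh 0 x)) (at x within {0..pi/2})"
      by (simp add: has_real_derivative_iff_has_vector_derivative[symmetric] has_field_derivative_at_within)
  qed
  moreover have "G (pi/2) - G 0 = sqrt 2/2 - 2" unfolding G_def by (simp add: sin_45)
  ultimately have "integral {0..pi/2} (\<lambda>x. -(3/2) * hh 0 x) = sqrt 2/2 - 2"
    by (metis integral_unique)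
  then have "-(3/2) * II 0 = sqrt 2/2 - 2" unfolding II_def by (metis integral_mult_right)
  then show ?thesis by simp
qed

definition RR :: "nat \<Rightarrow> real" where
  "RR q = 6 * 16^q / ((real q + 1) * real ((4*q+4) choose (2*q+2))) *
    (4/3 - sqrt 2 * (\<Sum>k=0..q. real ((4*k) choose (2*k)) / ((6 * real k + 3) * 16 ^ k)))"

lemma closed: "II q = RR q"
proof (induction q)
  case 0
  show ?case unfolding base RR_def by (simp add: c42 c42b)
next
  case (Suc q)
  define B where "B = real ((4*q+4) choose (2*q+2))"
  define B' where "B' = real ((4*q+8) choose (2*q+4))"
  define S where "S = (\<Sum>k=0..q. real ((4*k) choose (2*k)) / ((6 * real k + 3) * 16 ^ k))"
  have Bp: "B > 0" unfolding B_def by simp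
  have BB: "B' * ((2*real q+4)*(2*real q+3)) = 4*(4*real q+7)*(4*real q+5) * B"
    unfolding B_def B'_def using Brec[of q] by simp
  have o1: "1 \<le> (2*real q+3)^2" by (rule one_le_power) simp
  then have bcp: "(2*(2*real q+3)^2 - 1/2) \<noteq> 0" by linarith
  have IS: "II (Suc q) = (2*(2*real q+3)*(2*real q+2) * II q - sqrt 2/2) / (2*(2*real q+3)^2 - 1/2)"
    using step[of q] bcp by (simp add: eq_divide_eq mult.commute)
  have RQ: "RR q = 6*16^q/((real q+1)*B)*(4/3 - sqrt 2*S)" unfolding RR_def B_def S_def by simp
  have RS: "RR (Suc q) = 6*(16*16^q)/((real q+2)*B') * (4/3 - sqrt 2*(S + B/((6*(real q+1)+3)*(16*16^q))))"
  proof -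
    have e: "4*Suc q+4 = 4*q+8" "2*Suc q+2 = 2*q+4" "real (Suc q) + 1 = real q+2" "(16::real)^Suc q = 16*16^q"
      "4*Suc q = 4*q+4" "2*Suc q = 2*q+2" "real (Suc q) = real q + 1"
      "4*q+4+4 = 4*q+8" "2*q+2+2 = 2*q+4" "real q+1+1 = real q+2" by simp_all
    show ?thesis unfolding RR_def B_def B'_def S_def sum.atLeast0_atMost_Suc
      by (simp only: e)
  qed
  show ?case unfolding IS Suc.IH RQ RS
  proof -
    have P: "(16::real)^q > 0" by simp
    have X: "real q \<ge> 0" by simp
    show "(2 * (2 * real q + 3) * (2 * real q + 2) * (6 * 16 ^ q / ((real q + 1) * B) * (4 / 3 - sqrt 2 * S)) - sqrt 2 / 2) /
     (2 * (2 * real q + 3)^2 - 1 / 2) =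
     6 * (16 * 16 ^ q) / ((real q + 2) * B') * (4 / 3 - sqrt 2 * (S + B / ((6 * (real q + 1) + 3) * (16 * 16 ^ q))))"
      by (rule alg2x[of B "16^q" "real q" B' "sqrt 2" S, OF Bp P X BB, symmetric])
  qed
qed

theorem proposition4p0p2:
  fixes r :: nat
  assumes "r \<ge> 1"
  shows "integral {0..pi/2} (\<lambda>x. sin x ^ (2*r - 1) * cos (x/2)) =
    6 * 16 ^ (r - 1) / (real r * real ((4*r) choose (2*r))) *
    (4/3 - sqrt 2 * (\<Sum>k=0..r-1. real ((4*k) choose (2*k)) / ((6 * real k + 3) * 16 ^ k)))"
proof -
  obtain q where r: "r = Suc q" using assms by (cases r) auto
  have "integral {0..pi/2} (\<lambda>x. sin x ^ (2*r - 1) * cos (x/2)) = II q"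
  proof -
    have "2*r-1 = 2*q+1" using r by simp
    then show ?thesis unfolding II_def hh_def by simp
  qed
  also have "\<dots> = RR q" by (rule closed)
  also have "\<dots> = 6 * 16 ^ (r - 1) / (real r * real ((4*r) choose (2*r))) *
    (4/3 - sqrt 2 * (\<Sum>k=0..r-1. real ((4*k) choose (2*k)) / ((6 * real k + 3) * 16 ^ k)))"
  proof -
    have e: "4*r = 4*q+4" "2*r = 2*q+2" "r-1 = q" "real r = real q + 1" using r by simp_all
    show ?thesis unfolding RR_def e ..
  qed
  finally show ?thesis .
qed

end
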